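(* Let $\gamma:[0,1]\to\mathbb{R}^2$ be a $C^1$ curve with constant speed $c>0$ (i.e. $\|\gamma'(s)\|=c$ for all $s$), and let $\theta:[0,1]\to\mathbb{R}$ be a turning angle function for $\gamma$. If $\theta(1)-\theta(0)=2\pi m$ with $m\in\mathbb{Z}$, $m\neq 0$, then there exist cuts $0\le c_1\le c_2\le 1$ such that the rearranged curve $r_{(c_1,c_2)}$ is a closed $C^1$ curve, i.e. $r_{(c_1,c_2)}(0)=r_{(c_1,c_2)}(1)$ and $r_{(c_1,c_2)}'(0)=r_{(c_1,c_2)}'(1)$.
   Context: A turning angle function for $\gamma$ is a continuous function $\theta$ with $\gamma'(s)=c(\cos\theta(s),\sin\theta(s))$. Concatenation: if $\alpha$ on $[a_1,b_1]$ and $\beta$ on $[a_2,b_2]$ are $C^1$ planar curves with the same constant speed, $\alpha*\beta$ is the curve on $[0,(b_1-a_1)+(b_2-a_2)]$ that equals $\alpha(s+a_1)$ for $s\le b_1-a_1$ and equals $T(\beta(s-(b_1-a_1)+a_2))$ afterwards, where $T$ is the orientation-preserving rigid motion of $\mathbb{R}^2$ sending $\beta(a_2)$ to $\alpha(b_1)$ and the unit tangent $\beta'(a_2)/c$ to $\alpha'(b_1)/c$ (so $T$ also sends the rotated-by-$\pi/2$ normal to the corresponding normal). This operation is associative. For cuts $0\le c_1\le c_2\le 1$, let $\gamma_1,\gamma_2,\gamma_3$ be the restrictions of $\gamma$ to $[0,c_1]$, $[c_1,c_2]$, $[c_2,1]$ respectively (an arc of length zero is a point that still carries the tangent direction of $\gamma$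 at that parameter). The rearranged curve is $r_{(c_1,c_2)}:=\gamma_1*\gamma_3*\gamma_2:[0,1]\to\mathbb{R}^2$. *)

theory Defs
  imports "HOL-Analysis.Analysis"
begin

text \<open>The plane R^2 is identified with the complex numbers. A planar C^1 curve on [a,b]
  is represented together with its derivative as a tuple (f, f', a, b).\<close>

type_synonym pcurve = "(real \<Rightarrow> complex) \<times> (real \<Rightarrow> complex) \<times> real \<times> real"

text \<open>The orientation-preserving rigid motion sending point p to q and the direction u to
  the direction v (where norm u = norm v): rotation by v/u followed by translation.\<close>
definition rigid_motion :: "complex \<Rightarrow> complex \<Rightarrow> complex \<Rightarrow> complex \<Rightarrow> complex \<Rightarrow> complex" where
  "rigid_motion p u q v = (\<lambda>z. q + (v / u) * (z - p))"

definition concat :: "pcurve \<Rightarrow> pcurve \<Rightarrow> pcurve" where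
  "concat A B = (case A of (f, f', a1, b1) \<Rightarrow> case B of (g, g', a2, b2) \<Rightarrow>
     (let L1 = b1 - a1; L2 = b2 - a2;
          T = rigid_motion (g a2) (g' a2) (f b1) (f' b1)
      in ((\<lambda>s. if s \<le> L1 then f (s + a1) else T (g (s - L1 + a2))),
          (\<lambda>s. if s \<le> L1 then f' (s + a1) else (f' b1 / g' a2) * g' (s - L1 + a2)),
          0, L1 + L2)))"

definition restr :: "(real \<Rightarrow> complex) \<Rightarrow> (real \<Rightarrow> complex) \<Rightarrow> real \<Rightarrow> real \<Rightarrow> pcurve" where
  "restr f f' a b = (f, f', a, b)"

definition rearranged :: "(real \<Rightarrow> complex) \<Rightarrow> (real \<Rightarrow> complex) \<Rightarrow> real \<Rightarrow> real \<Rightarrow> (real \<Rightarrow> complex)" where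
  "rearranged f f' c1 c2 =
     fst (concat (concat (restr f f' 0 c1) (restr f f' c2 1)) (restr f f' c1 c2))"

end

theory Submission
  imports Defs
begin

lemma paste_deriv:
  fixes h h' :: "real \<Rightarrow> 'a::real_normed_vector"
  assumes "a \<le> m" "m \<le> b"
  and d1: "\<And>s. s \<in> {a..m} \<Longrightarrow> (h has_vector_derivative h' s) (at s within {a..m})"
  and d2: "\<And>s. s \<in> {m..b} \<Longrightarrow> (h has_vector_derivative h' s) (at s within {m..b})"
  and s: "s \<in> {a..b}"
  shows "(h has_vector_derivative h' s) (at s within {a..b})"
proof -
  have U: "{a..b} = {a..m} \<union> {m..b}" using assms by auto
  have bl: "bounded_linear (\<lambda>x. x *\<^sub>R h' s)" by (simp add: bounded_linear_scaleR_left)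
  have L1: "((\<lambda>y. ((h y - h s) - (y - s) *\<^sub>R h' s) /\<^sub>R norm (y - s)) \<longlongrightarrow> 0) (at s within {a..m})"
  proof (cases "s \<in> {a..m}")
    case True
    then show ?thesis using d1[OF True] unfolding has_vector_derivative_def has_derivative_at_within by blast
  next
    case False
    have "s \<notin> closure ({a..m} - {s})"
      using closure_minimal[OF Diff_subset closed_atLeastAtMost] False by blast
    then have "at s within {a..m} = bot" using at_within_eq_bot_iff by blast
    then show ?thesis by simp
  qed
  have L2: "((\<lambda>y. ((h y - h s) - (y - s) *\<^sub>R h' s) /\<^sub>R norm (y - s)) \<longlongrightarrow> 0) (at s within {m..b})"
  proof (cases "s \<in> {m..b}")
    case True
    then show ?thesis using d2[OF True] unfolding has_vector_derivative_def has_derivative_at_within by blast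
  next
    case False
    have "s \<notin> closure ({m..b} - {s})"
      using closure_minimal[OF Diff_subset closed_atLeastAtMost] False by blast
    then have "at s within {m..b} = bot" using at_within_eq_bot_iff by blast
    then show ?thesis by simp
  qed
  show ?thesis
    unfolding has_vector_derivative_def has_derivative_at_within
    using bl filterlim_sup[OF L1 L2] unfolding U at_within_union by blast
qed

lemma log_const:
  fixes g h :: "'a::topological_space \<Rightarrow> complex"
  assumes S: "connected S" and cg: "continuous_on S g" and ch: "continuous_on S h"
    and e: "\<And>x. x \<in> S \<Longrightarrow> exp (g x) = exp (h x)" and a: "a \<in> S" and b: "b \<in> S"
  shows "g a - h a = g b - h b"
proof -
  have "(\<lambda>x. g x - h x) constant_on S"
  proof (rule continuous_discrete_range_constant [OF S])
    show "continuous_on S (\<lambda>x. g x - h x)" using cg ch by (intro continuous_intros)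
    show "\<exists>e>0. \<forall>y. y \<in> S \<and> g y - h y \<noteq> g x - h x \<longrightarrow> e \<le> cmod (g y - h y - (g x - h x))"
      if "x \<in> S" for x
    proof -
      have "g y - g x = h y - h x"
        if "y \<in> S" "cmod (g y - g x - (h y - h x)) < 2 * pi" for y
      proof (rule exp_complex_eqI)
        have "\<bar>Im (g y - g x) - Im (h y - h x)\<bar> \<le> cmod (g y - g x - (h y - h x))"
          by (metis abs_Im_le_cmod minus_complex.simps(2))
        then show "\<bar>Im (g y - g x) - Im (h y - h x)\<bar> < 2 * pi"
          using that by linarith
        have "exp (g x) = exp (h x)" "exp (g y) = exp (h y)"
          using e that \<open>x \<in> S\<close> by fastforce+
        then show "exp (g y - g x) = exp (h y - h x)"
          by (simp add: exp_diff)
      qed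
      then show ?thesis
        by (rule_tac x="2*pi" in exI) (fastforce simp add: algebra_simps)
    qed
  qed
  then show ?thesis using a b by (auto simp: constant_on_def)
qed

lemma concat_C1:
  fixes f f' g g' h h' :: "real \<Rightarrow> complex"
  assumes ab1: "a1 \<le> b1" and ab2: "a2 \<le> b2"
    and df: "\<And>s. s \<in> {a1..b1} \<Longrightarrow> (f has_vector_derivative f' s) (at s within {a1..b1})"
    and cf: "continuous_on {a1..b1} f'"
    and dg: "\<And>s. s \<in> {a2..b2} \<Longrightarrow> (g has_vector_derivative g' s) (at s within {a2..b2})"
    and cg: "continuous_on {a2..b2} g'"
    and nz: "g' a2 \<noteq> 0"
    and eq: "concat (f,f',a1,b1) (g,g',a2,b2) = (h,h',z,e)"
  shows "z = 0 \<and> e = (b1-a1)+(b2-a2) \<and>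
    (\<forall>s\<in>{0..e}. (h has_vector_derivative h' s) (at s within {0..e})) \<and>
    continuous_on {0..e} h' \<and> h 0 = f a1 \<and> h' 0 = f' a1 \<and>
    h e = f b1 + (f' b1 / g' a2) * (g b2 - g a2) \<and>
    h' e = (f' b1 / g' a2) * g' b2"
proof -
  define L1 where "L1 = b1 - a1"
  define L where "L = L1 + (b2 - a2)"
  define k where "k = f' b1 / g' a2"
  define p where "p = (\<lambda>s. f (s + a1))"
  define p' where "p' = (\<lambda>s. f' (s + a1))"
  define q where "q = (\<lambda>s. f b1 + k * (g (s - L1 + a2) - g a2))"
  define q' where "q' = (\<lambda>s. k * g' (s - L1 + a2))"
  have hdef: "h = (\<lambda>s. if s \<le> L1 then p s else q s)"
    and h'def: "h' = (\<lambda>s. if s \<le> L1 then p' s else q' s)"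
    and z: "z = 0" and e: "e = L"
    using eq by (auto simp: concat_def Let_def rigid_motion_def L1_def L_def k_def p_def q_def p'_def q'_def)
  have L1: "0 \<le> L1" "L1 \<le> L" using ab1 ab2 by (auto simp: L1_def L_def)
  have pq: "p L1 = q L1" "p' L1 = q' L1"
    using nz by (auto simp: p_def q_def p'_def q'_def L1_def k_def)
  have img1: "(\<lambda>s. s + a1) ` {0..L1} = {a1..b1}"
    using ab1 by (auto simp: L1_def image_iff intro!: bexI[where x="_ - a1"])
  have img2: "(\<lambda>s. s - L1 + a2) ` {L1..L} = {a2..b2}"
    using ab2 by (auto simp: L1_def L_def image_iff intro!: bexI[where x="_ + L1 - a2"])
  have dp: "(p has_vector_derivative p' s) (at s within {0..L1})" if "s \<in> {0..L1}" for s
  proof -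
    have "((\<lambda>s. s + a1) has_vector_derivative 1) (at s within {0..L1})"
      by (auto intro!: derivative_eq_intros)
    moreover have "(f has_vector_derivative f' (s + a1)) (at (s + a1) within (\<lambda>s. s + a1) ` {0..L1})"
      unfolding img1 using df that by (auto simp: L1_def)
    ultimately show ?thesis
      using vector_diff_chain_within by (fastforce simp: p_def p'_def o_def)
  qed
  have dq: "(q has_vector_derivative q' s) (at s within {L1..L})" if "s \<in> {L1..L}" for s
  proof -
    have "((\<lambda>s. s - L1 + a2) has_vector_derivative 1) (at s within {L1..L})"
      by (auto intro!: derivative_eq_intros)
    moreover have "(g has_vector_derivative g' (s - L1 + a2)) (at (s - L1 + a2) within (\<lambda>s. s - L1 + a2) ` {L1..L})"
      unfolding img2 using dg that by (auto simp: L1_def L_def)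
    ultimately have "((g \<circ> (\<lambda>s. s - L1 + a2)) has_vector_derivative g' (s - L1 + a2)) (at s within {L1..L})"
      using vector_diff_chain_within by fastforce
    then have "((\<lambda>s. g (s - L1 + a2) - g a2) has_vector_derivative g' (s - L1 + a2) - 0) (at s within {L1..L})"
      by (intro has_vector_derivative_diff has_vector_derivative_const) (simp add: o_def)
    then have "((\<lambda>s. k * (g (s - L1 + a2) - g a2)) has_vector_derivative k * g' (s - L1 + a2)) (at s within {L1..L})"
      using has_vector_derivative_mult_right by fastforce
    then have "((\<lambda>s. f b1 + k * (g (s - L1 + a2) - g a2)) has_vector_derivative 0 + k * g' (s - L1 + a2)) (at s within {L1..L})"
      by (intro has_vector_derivative_add has_vector_derivative_const)
    then have "((\<lambda>s. f b1 + k * (g (s - L1 + a2) - g a2)) has_vector_derivative k * g' (s - L1 + a2)) (at s within {L1..L})"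
      by simp
    then show ?thesis by (simp add: q_def q'_def)
  qed
  have dh1: "(h has_vector_derivative h' s) (at s within {0..L1})" if "s \<in> {0..L1}" for s
  proof -
    have "(h has_vector_derivative p' s) (at s within {0..L1})"
      by (rule has_vector_derivative_transform[OF that _ dp[OF that]]) (auto simp: hdef)
    then show ?thesis using that by (simp add: h'def)
  qed
  have dh2: "(h has_vector_derivative h' s) (at s within {L1..L})" if "s \<in> {L1..L}" for s
  proof -
    have "(h has_vector_derivative q' s) (at s within {L1..L})"
      by (rule has_vector_derivative_transform[OF that _ dq[OF that]]) (auto simp: hdef pq)
    then show ?thesis using that pq by (auto simp: h'def)
  qed
  have D: "\<forall>s\<in>{0..L}. (h has_vector_derivative h' s) (at s within {0..L})"
    using paste_deriv[OF L1 dh1 dh2] by blast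
  have cp': "continuous_on {0..L1} p'"
    unfolding p'_def using img1
    by (intro continuous_on_compose2[OF cf] continuous_intros) auto
  have cq': "continuous_on {L1..L} q'"
    unfolding q'_def using img2
    by (intro continuous_on_mult continuous_on_const continuous_on_compose2[OF cg] continuous_intros) auto
  have C: "continuous_on {0..L} h'"
  proof -
    have "continuous_on ({0..L1} \<union> {L1..L}) h'"
    proof (rule continuous_on_closed_Un)
      show "continuous_on {0..L1} h'" using cp' by (rule continuous_on_eq) (auto simp: h'def)
      show "continuous_on {L1..L} h'" using cq' by (rule continuous_on_eq) (auto simp: h'def pq)
    qed auto
    moreover have "{0..L1} \<union> {L1..L} = {0..L}" using L1 by auto
    ultimately show ?thesis by simp
  qed
  have E: "h L = f b1 + k * (g b2 - g a2)" "h' L = k * g' b2"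
  proof -
    have "h L = q L" "h' L = q' L" using pq L1 by (auto simp: hdef h'def dest: antisym)
    then show "h L = f b1 + k * (g b2 - g a2)" "h' L = k * g' b2"
      by (auto simp: q_def q'_def L_def)
  qed
  show ?thesis using D C E z e L1
    by (auto simp: hdef h'def p_def p'_def k_def L_def L1_def)
qed

lemma rearr:
  fixes \<gamma> \<gamma>' :: "real \<Rightarrow> complex"
  assumes deriv: "\<And>s. s \<in> {0..1} \<Longrightarrow> (\<gamma> has_vector_derivative \<gamma>' s) (at s within {0..1})"
    and cont_deriv: "continuous_on {0..1} \<gamma>'"
    and nz: "\<And>s. s \<in> {0..1} \<Longrightarrow> \<gamma>' s \<noteq> 0"
    and c: "0 \<le> c1" "c1 \<le> c2" "c2 \<le> 1"
  shows "rearranged \<gamma> \<gamma>' c1 c2 0 = \<gamma> 0 \<and>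
    rearranged \<gamma> \<gamma>' c1 c2 1 = \<gamma> c1 + (\<gamma>' c1 / \<gamma>' c2) * (\<gamma> 1 - \<gamma> c2)
       + ((\<gamma>' c1 / \<gamma>' c2 * \<gamma>' 1) / \<gamma>' c1) * (\<gamma> c2 - \<gamma> c1) \<and>
    (\<exists>r'. (\<forall>s\<in>{0..1}. (rearranged \<gamma> \<gamma>' c1 c2 has_vector_derivative r' s) (at s within {0..1})) \<and>
         continuous_on {0..1} r' \<and> r' 0 = \<gamma>' 0 \<and> r' 1 = \<gamma>' 1)"
proof -
  have sub: "\<And>a b. 0 \<le> a \<Longrightarrow> b \<le> 1 \<Longrightarrow> {a..b} \<subseteq> {0..1::real}" by auto
  have dsub: "\<And>a b s. 0 \<le> a \<Longrightarrow> b \<le> 1 \<Longrightarrow> s \<in> {a..b} \<Longrightarrow> (\<gamma> has_vector_derivative \<gamma>' s) (at s within {a..b})"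
    using deriv has_vector_derivative_within_subset sub by (metis subsetD)
  have csub: "\<And>a b. 0 \<le> a \<Longrightarrow> b \<le> 1 \<Longrightarrow> continuous_on {a..b} \<gamma>'"
    using cont_deriv continuous_on_subset sub by metis
  obtain h1 h1' z1 e1 where I: "concat (\<gamma>,\<gamma>',0,c1) (\<gamma>,\<gamma>',c2,1) = (h1,h1',z1,e1)"
    by (metis prod_cases4)
  have cc: "c1 \<le> 1" "0 \<le> c2" using c by auto
  have da: "\<And>s. s \<in> {0..c1} \<Longrightarrow> (\<gamma> has_vector_derivative \<gamma>' s) (at s within {0..c1})"
    and db: "\<And>s. s \<in> {c2..1} \<Longrightarrow> (\<gamma> has_vector_derivative \<gamma>' s) (at s within {c2..1})"
    and dc: "\<And>s. s \<in> {c1..c2} \<Longrightarrow> (\<gamma> has_vector_derivative \<gamma>' s) (at s within {c1..c2})"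
    using dsub c cc by auto
  have ca: "continuous_on {0..c1} \<gamma>'" and cb: "continuous_on {c2..1} \<gamma>'" and ccc: "continuous_on {c1..c2} \<gamma>'"
    using csub c cc by auto
  have nza: "\<gamma>' c2 \<noteq> 0" "\<gamma>' c1 \<noteq> 0" using nz c cc by auto
  note F1 = concat_C1[OF c(1) c(3) da ca db cb nza(1) I]
  obtain h h' z e where O: "concat (h1,h1',z1,e1) (\<gamma>,\<gamma>',c1,c2) = (h,h',z,e)"
    by (metis prod_cases4)
  have ze1: "z1 = 0" "e1 = c1 + 1 - c2" using F1 c by auto
  have e1: "z1 \<le> e1" using ze1 c by auto
  have F2: "z = 0 \<and> e = (e1-z1)+(c2-c1) \<and>
    (\<forall>s\<in>{0..e}. (h has_vector_derivative h' s) (at s within {0..e})) \<and>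
    continuous_on {0..e} h' \<and> h 0 = h1 z1 \<and> h' 0 = h1' z1 \<and>
    h e = h1 e1 + (h1' e1 / \<gamma>' c1) * (\<gamma> c2 - \<gamma> c1) \<and>
    h' e = (h1' e1 / \<gamma>' c1) * \<gamma>' c2"
  proof (rule concat_C1[OF e1 c(2) _ _ dc ccc nza(2) O])
    show "\<And>s. s \<in> {z1..e1} \<Longrightarrow> (h1 has_vector_derivative h1' s) (at s within {z1..e1})"
      using F1 ze1 by auto
    show "continuous_on {z1..e1} h1'" using F1 ze1 by auto
  qed (use c in auto)
  have R: "rearranged \<gamma> \<gamma>' c1 c2 = h"
    unfolding rearranged_def restr_def I O by simp
  have e: "e = 1" using F2 ze1 by auto
  have nz2: "\<gamma>' c1 \<noteq> 0" "\<gamma>' c2 \<noteq> 0" "\<gamma>' 1 \<noteq> 0" using nz c by auto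
  have A: "h1 e1 = \<gamma> c1 + \<gamma>' c1 / \<gamma>' c2 * (\<gamma> 1 - \<gamma> c2)" "h1' e1 = \<gamma>' c1 / \<gamma>' c2 * \<gamma>' 1"
    using F1 by auto
  have B: "h 1 = h1 e1 + (h1' e1 / \<gamma>' c1) * (\<gamma> c2 - \<gamma> c1)" "h' 1 = (h1' e1 / \<gamma>' c1) * \<gamma>' c2"
    using F2 unfolding e by auto
  have B2: "h' 1 = \<gamma>' 1" unfolding B A using nz2 by (simp add: field_simps)
  have H1: "h 1 = \<gamma> c1 + (\<gamma>' c1 / \<gamma>' c2) * (\<gamma> 1 - \<gamma> c2)
       + ((\<gamma>' c1 / \<gamma>' c2 * \<gamma>' 1) / \<gamma>' c1) * (\<gamma> c2 - \<gamma> c1)" unfolding B A by simp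
  show ?thesis
    unfolding R H1 using F1 F2 ze1 B2 unfolding e by (intro conjI exI[of _ h']) auto
qed

theorem theorem3p1:
  fixes \<gamma> \<gamma>' :: "real \<Rightarrow> complex" and c :: real and \<theta> :: "real \<Rightarrow> real" and m :: int
  assumes deriv: "\<And>s. s \<in> {0..1} \<Longrightarrow> (\<gamma> has_vector_derivative \<gamma>' s) (at s within {0..1})"
    and cont_deriv: "continuous_on {0..1} \<gamma>'"
    and c_pos: "c > 0"
    and speed: "\<And>s. s \<in> {0..1} \<Longrightarrow> norm (\<gamma>' s) = c"
    and theta_cont: "continuous_on {0..1} \<theta>"
    and theta_turn: "\<And>s. s \<in> {0..1} \<Longrightarrow> \<gamma>' s = complex_of_real c * Complex (cos (\<theta> s)) (sin (\<theta> s))"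
    and total_turn: "\<theta> 1 - \<theta> 0 = 2 * pi * of_int m"
    and m_nz: "m \<noteq> 0"
  shows "\<exists>c1 c2. 0 \<le> c1 \<and> c1 \<le> c2 \<and> c2 \<le> 1 \<and>
           (let r = rearranged \<gamma> \<gamma>' c1 c2 in
              r 0 = r 1 \<and>
              (\<exists>r'. (\<forall>s\<in>{0..1}. (r has_vector_derivative r' s) (at s within {0..1})) \<and>
                    continuous_on {0..1} r' \<and> r' 0 = r' 1))"
proof -
  have ex: "\<And>s. s \<in> {0..1} \<Longrightarrow> \<gamma>' s = complex_of_real c * exp (\<i> * complex_of_real (\<theta> s))"
    using theta_turn by (simp add: cis_conv_exp[symmetric] complex_eq_iff)
  have nz: "\<And>s. s \<in> {0..1} \<Longrightarrow> \<gamma>' s \<noteq> 0"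
    using speed c_pos by fastforce
  have g10: "\<gamma>' 1 = \<gamma>' 0"
  proof -
    have "\<theta> 1 = \<theta> 0 + 2 * pi * of_int m" using total_turn by simp
    then have "exp (\<i> * complex_of_real (\<theta> 1)) = exp (\<i> * complex_of_real (\<theta> 0)) * exp ((2 * of_int m * pi) * \<i>)"
      by (simp add: exp_add[symmetric] algebra_simps)
    also have "exp ((2 * of_int m * pi) * \<i>) = 1"
      by (rule exp_integer_2pi) simp
    finally show ?thesis using ex[of 0] ex[of 1] by simp
  qed
  have contg: "continuous_on {0..1} \<gamma>"
    using deriv has_vector_derivative_continuous continuous_on_eq_continuous_within by blast
  define F where "F = (\<lambda>x::real\<times>real. \<gamma> (fst x) + (\<gamma>' (fst x) / \<gamma>' (snd x)) * (\<gamma> 1 - \<gamma> (snd x))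
       + ((\<gamma>' (fst x) / \<gamma>' (snd x) * \<gamma>' 1) / \<gamma>' (fst x)) * (\<gamma> (snd x) - \<gamma> (fst x)) - \<gamma> 0)"
  define T where "T = {x::real\<times>real. 0 \<le> fst x \<and> fst x \<le> snd x \<and> snd x \<le> 1}"
  have exz: "\<exists>x\<in>T. F x = 0"
  proof (rule ccontr)
    assume "\<not> ?thesis"
    then have F0: "F \<in> T \<rightarrow> - {0}" by auto
    have cvx: "convex T"
      unfolding convex_def
    proof (intro allI impI ballI)
      fix x y :: "real\<times>real" and u v :: real
      assume x: "x \<in> T" and y: "y \<in> T" and u: "0 \<le> u" and v: "0 \<le> v" and uv: "u + v = 1"
      have a: "0 \<le> fst x" "fst x \<le> snd x" "snd x \<le> 1" using x by (auto simp: T_def)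
      have b: "0 \<le> fst y" "fst y \<le> snd y" "snd y \<le> 1" using y by (auto simp: T_def)
      have 1: "0 \<le> u * fst x + v * fst y" using a b u v by simp
      have 2: "u * fst x + v * fst y \<le> u * snd x + v * snd y"
        using a b u v by (intro add_mono mult_left_mono)
      have "u * snd x + v * snd y \<le> u * 1 + v * 1"
        using a b u v by (intro add_mono mult_left_mono)
      then have 3: "u * snd x + v * snd y \<le> 1" using uv by simp
      show "u *\<^sub>R x + v *\<^sub>R y \<in> T" using 1 2 3 by (simp add: T_def)
    qed
    have fT: "fst ` T \<subseteq> {0..1}" and sT: "snd ` T \<subseteq> {0..1}" by (auto simp: T_def)
    have c1: "continuous_on T (\<lambda>x. \<gamma> (fst x))"
      by (rule continuous_on_compose2[OF contg _ fT]) (intro continuous_intros)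
    have c2: "continuous_on T (\<lambda>x. \<gamma> (snd x))"
      by (rule continuous_on_compose2[OF contg _ sT]) (intro continuous_intros)
    have c3: "continuous_on T (\<lambda>x. \<gamma>' (fst x))"
      by (rule continuous_on_compose2[OF cont_deriv _ fT]) (intro continuous_intros)
    have c4: "continuous_on T (\<lambda>x. \<gamma>' (snd x))"
      by (rule continuous_on_compose2[OF cont_deriv _ sT]) (intro continuous_intros)
    have n3: "\<And>x. x \<in> T \<Longrightarrow> \<gamma>' (fst x) \<noteq> 0" and n4: "\<And>x. x \<in> T \<Longrightarrow> \<gamma>' (snd x) \<noteq> 0"
      using nz by (auto simp: T_def)
    have contF: "continuous_on T F"
      unfolding F_def using c1 c2 c3 c4 n3 n4 by (intro continuous_intros) auto
    obtain g where contg: "continuous_on T g" and gF: "\<And>x. x \<in> T \<Longrightarrow> F x = exp (g x)"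
      using convex_imp_Borsukian[OF cvx] contF F0 unfolding Borsukian_continuous_logarithm by metis
    define V where "V = \<gamma> 1 - \<gamma> 0"
    have "F (1,1) = V" using nz[of 1] by (simp add: F_def V_def)
    moreover have "(1,1) \<in> T" by (simp add: T_def)
    ultimately have V0: "V \<noteq> 0" using F0 by force
    have side1: "F (0,s) = exp (\<i> * complex_of_real (\<theta> 0 - \<theta> s) + Ln V)" if "s \<in> {0..1}" for s
    proof -
      have "F (0,s) = (\<gamma>' 0 / \<gamma>' s) * V"
      proof -
        have k: "(\<gamma>' 0 / \<gamma>' s * \<gamma>' 1) / \<gamma>' 0 = \<gamma>' 0 / \<gamma>' s"
          using nz[of 0] g10 by simp
        have r: "\<And>k::complex. \<gamma> 0 + k * (\<gamma> 1 - \<gamma> s) + k * (\<gamma> s - \<gamma> 0) - \<gamma> 0 = k * (\<gamma> 1 - \<gamma> 0)"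
          by (simp add: algebra_simps)
        show ?thesis unfolding F_def V_def fst_conv snd_conv k by (rule r)
      qed
      also have "\<gamma>' 0 / \<gamma>' s = exp (\<i> * complex_of_real (\<theta> 0 - \<theta> s))"
      proof -
        have "\<gamma>' 0 / \<gamma>' s = exp (\<i> * complex_of_real (\<theta> 0)) / exp (\<i> * complex_of_real (\<theta> s))"
          using ex[of 0] ex[OF that] c_pos by simp
        also have "\<dots> = exp (\<i> * complex_of_real (\<theta> 0) - \<i> * complex_of_real (\<theta> s))"
          by (simp add: exp_diff)
        also have "\<dots> = exp (\<i> * complex_of_real (\<theta> 0 - \<theta> s))"
          by (simp add: algebra_simps)
        finally show ?thesis .
      qed
      finally show ?thesis using V0 by (simp add: exp_add)
    qed
    have side2: "F (s,1) = exp (Ln V)" if "s \<in> {0..1}" for s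
    proof -
      have k: "(\<gamma>' s / \<gamma>' 1 * \<gamma>' 1) / \<gamma>' s = 1" using nz[OF that] nz[of 1] by simp
      show ?thesis unfolding F_def V_def fst_conv snd_conv k using V0 by (simp add: V_def)
    qed
    have side3: "F (s,s) = exp (Ln V)" if "s \<in> {0..1}" for s
    proof -
      have k: "\<gamma>' s / \<gamma>' s = 1" using nz[OF that] by simp
      show ?thesis unfolding F_def V_def fst_conv snd_conv k using V0 by (simp add: V_def)
    qed
    have T1: "(\<lambda>s. (0::real, s)) ` {0..1} \<subseteq> T" and T2: "(\<lambda>s. (s, 1::real)) ` {0..1} \<subseteq> T"
      and T3: "(\<lambda>s. (s, s)) ` {0..1} \<subseteq> T" by (auto simp: T_def)
    have cg1: "continuous_on {0..1} (\<lambda>s. g (0, s))"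
      by (rule continuous_on_compose2[OF contg _ T1]) (intro continuous_intros)
    have cg2: "continuous_on {0..1} (\<lambda>s. g (s, 1))"
      by (rule continuous_on_compose2[OF contg _ T2]) (intro continuous_intros)
    have cg3: "continuous_on {0..1} (\<lambda>s. g (s, s))"
      by (rule continuous_on_compose2[OF contg _ T3]) (intro continuous_intros)
    have ct: "continuous_on {0..1} (\<lambda>s. \<i> * complex_of_real (\<theta> 0 - \<theta> s) + Ln V)"
      using theta_cont by (intro continuous_intros)
    have E1: "g (0,0) - (\<i> * complex_of_real (\<theta> 0 - \<theta> 0) + Ln V) = g (0,1) - (\<i> * complex_of_real (\<theta> 0 - \<theta> 1) + Ln V)"
      by (rule log_const[OF connected_Icc cg1 ct, of 0 1]) (auto simp: T_def gF[symmetric] side1)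
    have E2: "g (0,1) - Ln V = g (1,1) - Ln V"
      by (rule log_const[OF connected_Icc cg2 continuous_on_const[of "{0..1}" "Ln V"], of 0 1]) (auto simp: T_def gF[symmetric] side2)
    have E3: "g (0,0) - Ln V = g (1,1) - Ln V"
      by (rule log_const[OF connected_Icc cg3 continuous_on_const[of "{0..1}" "Ln V"], of 0 1]) (auto simp: T_def gF[symmetric] side3)
    have "\<i> * complex_of_real (\<theta> 0 - \<theta> 1) = 0" using E1 E2 E3 by (simp add: algebra_simps)
    then have "\<theta> 1 = \<theta> 0" by simp
    then show False using total_turn m_nz by simp
  qed
  then obtain c1 c2 where cs: "0 \<le> c1" "c1 \<le> c2" "c2 \<le> 1" and Fz: "F (c1,c2) = 0"
    by (auto simp: T_def)
  note R = rearr[OF deriv cont_deriv nz cs]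
  show ?thesis
  proof (intro exI conjI)
    show "0 \<le> c1" "c1 \<le> c2" "c2 \<le> 1" by (fact cs)+
    show "let r = rearranged \<gamma> \<gamma>' c1 c2 in r 0 = r 1 \<and>
       (\<exists>r'. (\<forall>s\<in>{0..1}. (r has_vector_derivative r' s) (at s within {0..1})) \<and> continuous_on {0..1} r' \<and> r' 0 = r' 1)"
    proof -
      have "\<gamma> c1 + (\<gamma>' c1 / \<gamma>' c2) * (\<gamma> 1 - \<gamma> c2)
       + ((\<gamma>' c1 / \<gamma>' c2 * \<gamma>' 1) / \<gamma>' c1) * (\<gamma> c2 - \<gamma> c1) = \<gamma> 0"
        using Fz unfolding F_def fst_conv snd_conv by simp
      then show ?thesis unfolding Let_def using R g10 by metis
    qed
  qed
qed

end
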